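(* (Working in $\mathbf{ZF}$.) Suppose that $f:X\to Y$ is a W-continuous mapping of a generalized topological space $X$ to a zero-dimensional generalized topological space $Y$. Then $f$ is w-continuous.
   Context: A generalized topological space (gts) $(X,\mathrm{Op}_X,\mathrm{Cov}_X)$ is in the sense of Delfs–Knebusch: $\mathrm{Op}_X\subseteq\mathcal P(X)$, $\mathrm{Cov}_X\subseteq\mathcal P(\mathrm{Op}_X)$ with (A1) $\emptyset,X$ open; (A2) finite unions/intersections of open sets open; (A3) finite families of open sets are in $\mathrm{Cov}_X$; (A4) unions of members of $\mathrm{Cov}_X$ are open; (A5) for $\mathcal U\in\mathrm{Cov}_X$ and open $V\subseteq\bigcup\mathcal U$, $\{V\cap U:U\in\mathcal U\}\in\mathrm{Cov}_X$; (A6) if $\mathcal U\in\mathrm{Cov}_X$ and $\mathcal V_U\in\mathrm{Cov}_X$ with $\bigcup\mathcal V_U=U$ then $\bigcup_U\mathcal V_U\in\mathrm{Cov}_X$; (A7) if $\mathcal U\in\mathrm{Cov}_X$, $\mathcal V\subseteq\mathrm{Op}_X$, $\bigcup\mathcal V=\bigcup\mathcal U$ and each member of $\mathcal U$ lies in a member of $\mathcal V$, then $\mathcal V\in\mathrm{Cov}_X$; (A8) if $\mathcal U\in\mathrm{Cov}_X$, $V\subseteq\bigcup\mathcal U$ and $V\cap U\in\mathrm{Op}_X$ for all $U\in\mathcal U$, then $V\in\mathrm{Op}_X$. For families $\mathcal U,\mathcal V$ of sets, $\mathcal U\preceq\mathcal V$ means every member of $\mathcal U$ is contained in a member of $\mathcal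 V$ and $\bigcup\mathcal U=\bigcup\mathcal V$; $f^{-1}(\mathcal V)=\{f^{-1}(V):V\in\mathcal V\}$. A map $f:X\to Y$ is w-continuous if for every finite (equivalently, essentially finite) family $\mathcal V\subseteq\mathrm{Op}_Y$ covering $Y$ there is a finite (essentially finite) family $\mathcal U\subseteq\mathrm{Op}_X$ covering $X$ with $\mathcal U\preceq f^{-1}(\mathcal V)$; it is W-continuous if for every $\mathcal V\in\mathrm{Cov}_Y$ covering $Y$ there is $\mathcal U\in\mathrm{Cov}_X$ covering $X$ with $\mathcal U\preceq f^{-1}(\mathcal V)$. A gts $Y$ is zero-dimensional if for each finite covering $\mathcal V\subseteq\mathrm{Op}_Y$ of $Y$ there is a pairwise disjoint finite covering $\mathcal W\subseteq\mathrm{Op}_Y$ of $Y$ with $\mathcal W\preceq\mathcal V$. *)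

theory Defs
  imports Main
begin

text \<open>Generalized topological space (Delfs--Knebusch) on carrier X with
  open sets Op and admissible coverings Cov, axioms (A1)--(A8).\<close>
definition gts :: "'a set \<Rightarrow> 'a set set \<Rightarrow> 'a set set set \<Rightarrow> bool" where
  "gts X Op Cov \<longleftrightarrow>
     Op \<subseteq> Pow X \<and> Cov \<subseteq> Pow Op \<and>
     \<comment> \<open>(A1)\<close>
     {} \<in> Op \<and> X \<in> Op \<and>
     \<comment> \<open>(A2)\<close>
     (\<forall>U\<in>Op. \<forall>V\<in>Op. U \<union> V \<in> Op \<and> U \<inter> V \<in> Op) \<and>
     \<comment> \<open>(A3)\<close>
     (\<forall>\<U>. finite \<U> \<and> \<U> \<subseteq> Op \<longrightarrow> \<U> \<in> Cov) \<and>
     \<comment> \<open>(A4)\<close>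
     (\<forall>\<U>\<in>Cov. \<Union>\<U> \<in> Op) \<and>
     \<comment> \<open>(A5)\<close>
     (\<forall>\<U>\<in>Cov. \<forall>V\<in>Op. V \<subseteq> \<Union>\<U> \<longrightarrow> (\<lambda>U. V \<inter> U) ` \<U> \<in> Cov) \<and>
     \<comment> \<open>(A6)\<close>
     (\<forall>\<U>\<in>Cov. \<forall>\<V> :: 'a set \<Rightarrow> 'a set set.
        (\<forall>U\<in>\<U>. \<V> U \<in> Cov \<and> \<Union>(\<V> U) = U) \<longrightarrow> \<Union>(\<V> ` \<U>) \<in> Cov) \<and>
     \<comment> \<open>(A7)\<close>
     (\<forall>\<U>\<in>Cov. \<forall>\<V>. \<V> \<subseteq> Op \<and> \<Union>\<V> = \<Union>\<U> \<and> (\<forall>U\<in>\<U>. \<exists>V\<in>\<V>. U \<subseteq> V)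
        \<longrightarrow> \<V> \<in> Cov) \<and>
     \<comment> \<open>(A8)\<close>
     (\<forall>\<U>\<in>Cov. \<forall>V. V \<subseteq> \<Union>\<U> \<and> (\<forall>U\<in>\<U>. V \<inter> U \<in> Op) \<longrightarrow> V \<in> Op)"

definition refines :: "'a set set \<Rightarrow> 'a set set \<Rightarrow> bool" (infix "\<preceq>\<^sub>c" 50) where
  "\<U> \<preceq>\<^sub>c \<V> \<longleftrightarrow> (\<forall>U\<in>\<U>. \<exists>V\<in>\<V>. U \<subseteq> V) \<and> \<Union>\<U> = \<Union>\<V>"

definition preimage_fam :: "'a set \<Rightarrow> ('a \<Rightarrow> 'b) \<Rightarrow> 'b set set \<Rightarrow> 'a set set" where
  "preimage_fam X f \<V> = (\<lambda>V. X \<inter> f -` V) ` \<V>"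

definition w_continuous ::
  "'a set \<Rightarrow> 'a set set \<Rightarrow> 'b set \<Rightarrow> 'b set set \<Rightarrow> ('a \<Rightarrow> 'b) \<Rightarrow> bool" where
  "w_continuous X OpX Y OpY f \<longleftrightarrow>
     (\<forall>\<V>. finite \<V> \<and> \<V> \<subseteq> OpY \<and> \<Union>\<V> = Y \<longrightarrow>
        (\<exists>\<U>. finite \<U> \<and> \<U> \<subseteq> OpX \<and> \<Union>\<U> = X \<and> \<U> \<preceq>\<^sub>c preimage_fam X f \<V>))"

definition W_continuous ::
  "'a set \<Rightarrow> 'a set set set \<Rightarrow> 'b set \<Rightarrow> 'b set set set \<Rightarrow> ('a \<Rightarrow> 'b) \<Rightarrow> bool" where
  "W_continuous X CovX Y CovY f \<longleftrightarrow>
     (\<forall>\<V>\<in>CovY. \<Union>\<V> = Y \<longrightarrow>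
        (\<exists>\<U>\<in>CovX. \<Union>\<U> = X \<and> \<U> \<preceq>\<^sub>c preimage_fam X f \<V>))"

definition zero_dimensional :: "'b set \<Rightarrow> 'b set set \<Rightarrow> bool" where
  "zero_dimensional Y OpY \<longleftrightarrow>
     (\<forall>\<V>. finite \<V> \<and> \<V> \<subseteq> OpY \<and> \<Union>\<V> = Y \<longrightarrow>
        (\<exists>\<W>. finite \<W> \<and> \<W> \<subseteq> OpY \<and> \<Union>\<W> = Y \<and> pairwise disjnt \<W> \<and> \<W> \<preceq>\<^sub>c \<V>))"

end

theory Submission
  imports Defs
begin

lemma gts_A3: "gts X Op Cov \<Longrightarrow> finite \<U> \<Longrightarrow> \<U> \<subseteq> Op \<Longrightarrow> \<U> \<in> Cov"
  unfolding gts_def by (elim conjE allE impE) (rule conjI, assumption+)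
lemma gts_CovOp: "gts X Op Cov \<Longrightarrow> \<U> \<in> Cov \<Longrightarrow> \<U> \<subseteq> Op"
proof -
  assume "gts X Op Cov" "\<U> \<in> Cov"
  moreover have "Cov \<subseteq> Pow Op" using \<open>gts X Op Cov\<close> unfolding gts_def by (elim conjE)
  ultimately show ?thesis by auto
qed
lemma gts_empty: "gts X Op Cov \<Longrightarrow> {} \<in> Op"
  unfolding gts_def by (elim conjE) assumption
lemma gts_A8: "gts X Op Cov \<Longrightarrow> \<U> \<in> Cov \<Longrightarrow> V \<subseteq> \<Union>\<U> \<Longrightarrow> (\<And>U. U\<in>\<U> \<Longrightarrow> V \<inter> U \<in> Op) \<Longrightarrow> V \<in> Op"
proof -
  assume g: "gts X Op Cov" and h: "\<U> \<in> Cov" "V \<subseteq> \<Union>\<U>" "\<And>U. U\<in>\<U> \<Longrightarrow> V \<inter> U \<in> Op"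
  have A8: "\<forall>\<U>\<in>Cov. \<forall>V. V \<subseteq> \<Union>\<U> \<and> (\<forall>U\<in>\<U>. V \<inter> U \<in> Op) \<longrightarrow> V \<in> Op"
    using g unfolding gts_def by (elim conjE)
  show ?thesis using A8 h by blast
qed

theorem proposition8p7:
  fixes f :: "'a \<Rightarrow> 'b"
  assumes "gts X OpX CovX"
    and "gts Y OpY CovY"
    and "f ` X \<subseteq> Y"
    and "W_continuous X CovX Y CovY f"
    and "zero_dimensional Y OpY"
  shows "w_continuous X OpX Y OpY f"
  unfolding w_continuous_def
proof (intro allI impI)
  fix \<V> assume V: "finite \<V> \<and> \<V> \<subseteq> OpY \<and> \<Union>\<V> = Y"
  have "\<exists>\<W>. finite \<W> \<and> \<W> \<subseteq> OpY \<and> \<Union>\<W> = Y \<and> pairwise disjnt \<W> \<and> \<W> \<preceq>\<^sub>c \<V>"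
    using assms(5) V unfolding zero_dimensional_def by (elim allE impE) (assumption, assumption)
  then obtain \<W> where W: "finite \<W>" "\<W> \<subseteq> OpY" "\<Union>\<W> = Y" "pairwise disjnt \<W>" "\<W> \<preceq>\<^sub>c \<V>"
    by (elim exE conjE) (rule that)
  have WC: "\<W> \<in> CovY" using gts_A3[OF assms(2) W(1) W(2)] .
  then obtain \<U> where U: "\<U> \<in> CovX" "\<Union>\<U> = X" "\<U> \<preceq>\<^sub>c preimage_fam X f \<W>"
    using assms(4) W unfolding W_continuous_def by blast
  have UO: "\<U> \<subseteq> OpX" using gts_CovOp[OF assms(1) U(1)] .
  have E: "{} \<in> OpX" using gts_empty[OF assms(1)] .
  define P where "P = preimage_fam X f \<W>"
  have "P \<subseteq> OpX"
  proof
    fix p assume "p \<in> P"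
    then obtain w where w: "w \<in> \<W>" "p = X \<inter> f -` w" unfolding P_def preimage_fam_def by blast
    have H1: "\<forall>u\<in>\<U>. p \<inter> u \<in> OpX"
    proof
      fix u assume u: "u \<in> \<U>"
      then obtain w' where w': "w' \<in> \<W>" "u \<subseteq> X \<inter> f -` w'"
        using U(3) unfolding refines_def preimage_fam_def by blast
      show "p \<inter> u \<in> OpX"
      proof (cases "w' = w")
        case True then have "p \<inter> u = u" using w w' by blast
        then show ?thesis using u UO by auto
      next
        case False then have "disjnt w w'" using W(4) w w' unfolding pairwise_def by blast
        then have "p \<inter> u = {}" using w w' unfolding disjnt_def by blast
        then show ?thesis using E by simp
      qed
    qed
    have H2: "p \<subseteq> \<Union>\<U>" using U(2) w by blast
    show "p \<in> OpX" by (rule gts_A8[OF assms(1) U(1) H2]) (use H1 in blast)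
  qed
  moreover have "finite P" unfolding P_def preimage_fam_def using W(1) by simp
  moreover have "\<Union>P = X"
  proof
    show "\<Union>P \<subseteq> X" unfolding P_def preimage_fam_def by auto
    show "X \<subseteq> \<Union>P"
    proof
      fix x assume "x \<in> X"
      then have "f x \<in> \<Union>\<W>" using W(3) assms(3) by auto
      then obtain w where "w \<in> \<W>" "f x \<in> w" by auto
      then show "x \<in> \<Union>P" unfolding P_def preimage_fam_def using \<open>x \<in> X\<close> by auto
    qed
  qed
  moreover have "P \<preceq>\<^sub>c preimage_fam X f \<V>"
  proof -
    have "\<forall>p\<in>P. \<exists>q\<in>preimage_fam X f \<V>. p \<subseteq> q"
    proof
      fix p assume "p \<in> P"
      then obtain w where w: "w \<in> \<W>" "p = X \<inter> f -` w" unfolding P_def preimage_fam_def by blast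
      then obtain v where "v \<in> \<V>" "w \<subseteq> v" using W(5) unfolding refines_def by blast
      then have "X \<inter> f -` v \<in> preimage_fam X f \<V>" "p \<subseteq> X \<inter> f -` v"
        using w unfolding preimage_fam_def by auto
      then show "\<exists>q\<in>preimage_fam X f \<V>. p \<subseteq> q" by (intro bexI)
    qed
    moreover have "\<Union>(preimage_fam X f \<V>) = X"
    proof
      show "\<Union>(preimage_fam X f \<V>) \<subseteq> X" unfolding preimage_fam_def by auto
      show "X \<subseteq> \<Union>(preimage_fam X f \<V>)"
      proof
        fix x assume "x \<in> X"
        then have "f x \<in> \<Union>\<V>" using V assms(3) by auto
        then obtain v where "v \<in> \<V>" "f x \<in> v" by auto
        then show "x \<in> \<Union>(preimage_fam X f \<V>)" unfolding preimage_fam_def using \<open>x \<in> X\<close> by auto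
      qed
    qed
    ultimately show ?thesis unfolding refines_def using \<open>\<Union>P = X\<close> by simp
  qed
  ultimately show "\<exists>\<U>. finite \<U> \<and> \<U> \<subseteq> OpX \<and> \<Union>\<U> = X \<and> \<U> \<preceq>\<^sub>c preimage_fam X f \<V>" by blast
qed

end
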